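(* Consider the faulty-starter delivery problem described in the context, with finisher starting position $(x,y)\neq(0,0)$, $y\ge0$, and $(x,y)\in\overline{D}(1,1)$. Then for every $a\in[0,1]$ and every algorithm $\mathcal{A}_a$ of the class described in the context, $\min\{\mathrm{CR}_{\mathcal{A}_d},\mathrm{CR}_{\mathcal{A}_0}\}\le \mathrm{CR}_{\mathcal{A}_a}$.
   Context: Setting. In the plane let $S=(0,0)$ and $T=(1,0)$. A "starter" drone carrying a package starts at $S$ at time $0$ and moves at unit speed along $\overline{ST}$ towards $T$. At an unknown time $t\in[0,1]$ it fails and stays forever at $(t,0)$ with the package (at time $s$ the package is at $(\min\{s,t\},0)$). A "finisher" drone starts at time $0$ at $P=(x,y)$ with $y\ge0$, moves at unit speed and can stop and turn instantaneously. The package can be handed over only when the drones are co-located; it is delivered at the first time the finisher, carrying the package, is at $T$. An online algorithm $\mathcal{A}$ specifies the finisher's trajectory using only $(x,y)$; $A(t)$ is its delivery time for fail time $t$. $\mathrm{Opt}(t)=\max\{1,\sqrt{(x-t)^2+y^2}+1-t\}$ is the optimal offline delivery time. $\mathrm{CR}_{\mathcal{A}}(t)=A(t)/\mathrm{Opt}(t)$ and $\mathrm{CR}_{\mathcal{A}}=\sup_{0\le t\le1}\mathrm{CR}_{\mathcal{A}}(t)$. $\overline{D}(c,r)$ denotes the closed disk of radius $r$ centered at $(c,0)$. Algorithms. $\mathcal{A}_0$: the finisher goes straight to $S$, then along $\overline{ST}$ towards $T$ until it finds the package, then on to $T$. $\mathcal{A}_d$ (for $x>0$): with $d=(x^2+y^2)/(2x)$,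 the finisher goes straight to $(d,0)$, then towards $S$ along the segment until it finds the package, then goes to $T$. For $a\in[0,1]$, an algorithm $\mathcal{A}_a$ is any online algorithm in which the finisher moves from $P$ along a straight line to $(a,0)$ and afterwards remains within $\overline{ST}$ until it picks up the package, after which it goes to $T$. *)

theory Defs
  imports "HOL-Analysis.Analysis"
begin

text \<open>S = (0,0), T = (1,0). A finisher trajectory (before pickup) is a function
  f :: real \<Rightarrow> real \<times> real of time (only times s \<ge> 0 matter).\<close>

text \<open>Position of the package at time s when the starter fails at time t.\<close>
definition pkg :: "real \<Rightarrow> real \<Rightarrow> real \<times> real" where
  "pkg t s = (min s t, 0)"

definition meet_times :: "(real \<Rightarrow> real \<times> real) \<Rightarrow> real \<Rightarrow> real set" where
  "meet_times f t = {s. 0 \<le> s \<and> f s = pkg t s}"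

text \<open>Delivery time: the finisher picks up the package at the first meeting time \<tau>
  (the package is then at (min \<tau> t, 0)) and goes straight to T = (1,0).\<close>
definition deliv :: "(real \<Rightarrow> real \<times> real) \<Rightarrow> real \<Rightarrow> ereal" where
  "deliv f t = (if meet_times f t \<noteq> {}
      then ereal (Inf (meet_times f t) + 1 - min (Inf (meet_times f t)) t)
      else \<infinity>)"

definition opt :: "real \<Rightarrow> real \<Rightarrow> real \<Rightarrow> real" where
  "opt x y t = max 1 (sqrt ((x - t)\<^sup>2 + y\<^sup>2) + 1 - t)"

definition CR :: "real \<Rightarrow> real \<Rightarrow> (real \<Rightarrow> real \<times> real) \<Rightarrow> ereal" where
  "CR x y f = (SUP t\<in>{0..1}. deliv f t / ereal (opt x y t))"

definition path_A0 :: "real \<Rightarrow> real \<Rightarrow> real \<Rightarrow> real \<times> real" where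
  "path_A0 x y s = (let h = sqrt (x\<^sup>2 + y\<^sup>2) in
     if s \<le> h then (x, y) + (s / h) *\<^sub>R ((0, 0) - (x, y))
     else (min (s - h) 1, 0))"

definition path_Ad :: "real \<Rightarrow> real \<Rightarrow> real \<Rightarrow> real \<times> real" where
  "path_Ad x y s = (let d = (x\<^sup>2 + y\<^sup>2) / (2 * x) in
     if s \<le> d then (x, y) + (s / d) *\<^sub>R ((d, 0) - (x, y))
     else (max (d - (s - d)) 0, 0))"

end

theory Submission
  imports Defs
begin


lemma dist_axis: "dist ((p::real), (0::real)) (q, 0) = \<bar>p - q\<bar>"
  by (simp add: dist_Pair_Pair dist_real_def)

lemma dist_P_axis: "dist ((x::real), (y::real)) (t, 0) = sqrt ((x - t)\<^sup>2 + y\<^sup>2)"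
  by (simp add: dist_Pair_Pair dist_real_def)

lemma deliv_upper:
  assumes "0 \<le> s" "f s = pkg t s"
  shows "deliv f t \<le> ereal (s + 1 - min s t)"
proof -
  have ne: "meet_times f t \<noteq> {}" using assms unfolding meet_times_def by auto
  have "Inf (meet_times f t) \<le> s"
    by (rule cInf_lower) (use assms in \<open>auto simp: meet_times_def bdd_below_def\<close>)
  hence "Inf (meet_times f t) + 1 - min (Inf (meet_times f t)) t \<le> s + 1 - min s t"
    by (simp add: min_def)
  thus ?thesis using ne unfolding deliv_def by simp
qed

lemma deliv_lower:
  assumes "\<And>s. s \<in> meet_times f t \<Longrightarrow> b \<le> s" "t \<le> b"
  shows "ereal (b + 1 - t) \<le> deliv f t"
proof (cases "meet_times f t = {}")
  case True thus ?thesis unfolding deliv_def by simp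
next
  case False
  have "b \<le> Inf (meet_times f t)"
    by (rule cInf_greatest) (use False assms in auto)
  hence "b + 1 - t \<le> Inf (meet_times f t) + 1 - min (Inf (meet_times f t)) t"
    using assms by (simp add: min_def)
  thus ?thesis using False unfolding deliv_def by simp
qed

lemma opt_ge1: "1 \<le> opt x y t" unfolding opt_def by simp

lemma CR_lower:
  assumes "t \<in> {0..1}" "\<And>s. s \<in> meet_times f t \<Longrightarrow> b \<le> s" "t \<le> b"
  shows "ereal ((b + 1 - t) / opt x y t) \<le> CR x y f"
proof -
  have p: "0 < opt x y t" using opt_ge1[of x y t] by linarith
  have "ereal ((b + 1 - t) / opt x y t) = ereal (b + 1 - t) / ereal (opt x y t)"
    using p by simp
  also have "\<dots> \<le> deliv f t / ereal (opt x y t)"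
    by (rule ereal_divide_right_mono) (use deliv_lower[OF assms(2,3)] p in auto)
  also have "\<dots> \<le> CR x y f" unfolding CR_def
    by (rule SUP_upper) (use assms in auto)
  finally show ?thesis .
qed

lemma ratio_upper:
  assumes "0 \<le> s" "f s = pkg t s" "s + 1 - min s t \<le> v"
  shows "deliv f t / ereal (opt x y t) \<le> ereal (v / opt x y t)"
proof -
  have p: "0 < opt x y t" using opt_ge1[of x y t] by linarith
  have "deliv f t / ereal (opt x y t) \<le> ereal v / ereal (opt x y t)"
    by (rule ereal_divide_right_mono) (use order_trans[OF deliv_upper[of s f t, OF assms(1,2)]] assms(3) p in auto)
  also have "\<dots> = ereal (v / opt x y t)" using p by simp
  finally show ?thesis .
qed



lemma CR_le:
  assumes "\<And>t. t \<in> {0..1} \<Longrightarrow> deliv f t / ereal (opt x y t) \<le> B"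
  shows "CR x y f \<le> B"
  unfolding CR_def by (rule SUP_least) (use assms in auto)

lemma A0_pos:
  assumes "0 < y" "t \<in> {0..1}"
  shows "deliv (path_A0 x y) t / ereal (opt x y t) \<le> ereal (1 + sqrt (x\<^sup>2 + y\<^sup>2))"
proof -
  define h where "h = sqrt (x\<^sup>2 + y\<^sup>2)"
  have hp: "0 < h" unfolding h_def using assms by (simp add: add_nonneg_pos)
  have "path_A0 x y (h + t) = pkg t (h + t)"
    using assms hp unfolding path_A0_def pkg_def h_def[symmetric] Let_def by auto
  hence "deliv (path_A0 x y) t / ereal (opt x y t) \<le> ereal ((1 + h) / opt x y t)"
    by (intro ratio_upper) (use assms hp in auto)
  also have "\<dots> \<le> ereal (1 + h)"
    using opt_ge1[of x y t] hp by (simp add: divide_le_eq)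
  finally show ?thesis unfolding h_def .
qed

lemma A0_zero:
  assumes "0 < x" "t \<in> {0..1}"
  shows "deliv (path_A0 x 0) t / ereal (opt x 0 t) \<le> ereal 1"
proof (cases "x / 2 \<le> t")
  case True
  have "path_A0 x 0 (x/2) = pkg t (x/2)"
    using assms True unfolding path_A0_def pkg_def Let_def by auto
  hence "deliv (path_A0 x 0) t / ereal (opt x 0 t) \<le> ereal (1 / opt x 0 t)"
    by (intro ratio_upper) (use assms True in auto)
  also have "\<dots> \<le> ereal 1"
    using opt_ge1[of x 0 t] by simp
  finally show ?thesis .
next
  case False
  have "path_A0 x 0 (x - t) = pkg t (x - t)"
    using assms False unfolding path_A0_def pkg_def Let_def by auto
  hence "deliv (path_A0 x 0) t / ereal (opt x 0 t) \<le> ereal ((x + 1 - 2*t) / opt x 0 t)"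
    by (intro ratio_upper) (use assms False in auto)
  also have "\<dots> \<le> ereal 1"
  proof -
    have "x + 1 - 2*t \<le> opt x 0 t" unfolding opt_def using False by auto
    thus ?thesis using opt_ge1[of x 0 t] by simp
  qed
  finally show ?thesis .
qed

lemma Ad_far:
  assumes "0 < x" "t \<in> {0..1}" "(x\<^sup>2 + y\<^sup>2) / (2 * x) \<le> t"
  shows "deliv (path_Ad x y) t / ereal (opt x y t) \<le> ereal 1"
proof -
  define d where "d = (x\<^sup>2 + y\<^sup>2) / (2 * x)"
  have dp: "0 < d" unfolding d_def using assms by (simp add: add_pos_nonneg)
  have "path_Ad x y d = pkg t d"
    using assms dp unfolding path_Ad_def pkg_def d_def[symmetric] Let_def by auto
  hence "deliv (path_Ad x y) t / ereal (opt x y t) \<le> ereal (1 / opt x y t)"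
    by (intro ratio_upper) (use assms dp d_def in auto)
  also have "\<dots> \<le> ereal 1" using opt_ge1[of x y t] by simp
  finally show ?thesis .
qed

lemma Ad_near:
  assumes "0 < x" "t \<in> {0..1}" "t < (x\<^sup>2 + y\<^sup>2) / (2 * x)"
  shows "deliv (path_Ad x y) t / ereal (opt x y t)
     \<le> ereal ((1 + 2 * ((x\<^sup>2 + y\<^sup>2) / (2 * x)) - 2 * t) / opt x y t)"
proof -
  define d where "d = (x\<^sup>2 + y\<^sup>2) / (2 * x)"
  have "path_Ad x y (2*d - t) = pkg t (2*d - t)"
    using assms unfolding path_Ad_def pkg_def d_def[symmetric] Let_def by auto
  moreover have td: "t < d" using assms d_def by simp
  moreover have "min (2*d - t) t = t" using td by simp
  ultimately show ?thesis unfolding d_def[symmetric]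
    by (intro ratio_upper) (use assms td in auto)
qed



lemma key_ineq:
  fixes e0 E h d c t0 M :: real
  assumes "0 \<le> e0" "0 \<le> E" "c \<le> t0" "t0 \<le> d" "d \<le> 1" "0 \<le> t0"
    "h - 2*t0 \<le> e0" "E - e0 \<le> 2*(t0 - c)" "1 + E \<le> M"
    "(1+E) + 2*(d-c) \<le> M*(1+E)" "M < 1 + h"
  shows "1 + 2*d - 2*t0 \<le> M*(1+e0)"
proof (rule ccontr)
  assume neg: "\<not> ?thesis"
  define Z where "Z = (2*(d-t0) - e0)/(1+e0)"
  have Zeq: "Z*(1+e0) = 2*(d-t0) - e0" unfolding Z_def using assms(1) by simp
  have MZ: "M < 1 + Z"
  proof -
    have "M*(1+e0) < (1+Z)*(1+e0)" using neg Zeq by (simp add: algebra_simps)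
    thus ?thesis using assms(1) by (simp add: mult_less_cancel_right)
  qed
  define m where "m = min Z h"
  have Mm: "M < 1 + m" using MZ assms(11) unfolding m_def by simp
  have Em: "E < m" using Mm assms(9) by simp
  show False
  proof (cases "m \<le> 1")
    case True
    have Z0: "0 \<le> Z" using Em assms(2) unfolding m_def by simp
    have "m * E \<le> E" using True assms(2) mult_right_mono[of m 1 E] by simp
    hence "m*(1+E) \<le> Z + E" using m_def by (simp add: algebra_simps)
    also have "\<dots> \<le> Z*(1+e0) + E" using Z0 assms(1) by (simp add: algebra_simps)
    also have "\<dots> \<le> 2*(d-c)" using Zeq assms(8) by simp
    finally have "(1+m)*(1+E) \<le> M*(1+E)" using assms(10) by (simp add: algebra_simps)
    hence "1 + m \<le> M" using assms(2) by (simp add: mult_le_cancel_right)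
    thus False using Mm by simp
  next
    case False
    hence "1 < Z" "1 < h" unfolding m_def by auto
    have "1*(1+e0) < Z*(1+e0)"
      using \<open>1 < Z\<close> assms(1) by (intro mult_strict_right_mono) auto
    hence "1 + e0 < 2*(d-t0) - e0" using Zeq by simp
    thus False using assms(1,5,7) \<open>1 < h\<close> by (simp add: algebra_simps)
  qed
qed



lemma CR_ge:
  assumes "t \<in> {0..1}"
  shows "deliv f t / ereal (opt x y t) \<le> CR x y f"
  unfolding CR_def by (rule SUP_upper) (use assms in auto)

lemma deliv_ge1: "ereal 1 \<le> deliv f t"
  unfolding deliv_def by (auto simp: min_def)

lemma CR_inf:
  assumes "t \<in> {0..1}" "meet_times f t = {}"
  shows "CR x y f = \<infinity>"
proof -
  have p: "0 < opt x y t" using opt_ge1[of x y t] by linarith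
  have "deliv f t / ereal (opt x y t) = \<infinity>"
    using assms p unfolding deliv_def by simp
  thus ?thesis using CR_ge[OF assms(1), of f x y] by simp
qed

lemma meet_closed:
  assumes "continuous_on {0..} f"
  shows "closed (meet_times f t)"
proof -
  have "meet_times f t = {0..} \<inter> (\<lambda>s. f s - pkg t s) -` {0}"
    unfolding meet_times_def by auto
  moreover have "continuous_on {0..} (\<lambda>s. f s - pkg t s)"
    unfolding pkg_def by (intro continuous_intros assms)
  ultimately show ?thesis
    by (metis closed_atLeast closed_singleton continuous_closed_preimage)
qed

lemma meet_Inf:
  assumes "continuous_on {0..} f" "meet_times f t \<noteq> {}"
  shows "Inf (meet_times f t) \<in> meet_times f t"
    "\<And>s. s \<in> meet_times f t \<Longrightarrow> Inf (meet_times f t) \<le> s"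
proof -
  have bb: "bdd_below (meet_times f t)"
    unfolding meet_times_def bdd_below_def by auto
  show "Inf (meet_times f t) \<in> meet_times f t"
    by (rule closed_contains_Inf) (use assms bb meet_closed in auto)
  show "\<And>s. s \<in> meet_times f t \<Longrightarrow> Inf (meet_times f t) \<le> s"
    using bb by (rule cInf_lower[rotated])
qed



theorem lemma3:
  fixes x y a :: real and f :: "real \<Rightarrow> real \<times> real"
  assumes P_ne: "(x, y) \<noteq> (0, 0)"
    and y_nonneg: "0 \<le> y"
    and in_disk: "(x - 1)\<^sup>2 + y\<^sup>2 \<le> 1"
    and a_range: "0 \<le> a" "a \<le> 1"
    and speed: "\<And>r s. 0 \<le> r \<Longrightarrow> 0 \<le> s \<Longrightarrow> dist (f r) (f s) \<le> \<bar>r - s\<bar>"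
    and straight: "\<And>s. 0 \<le> s \<Longrightarrow> s \<le> dist (x, y) (a, 0) \<Longrightarrow>
        f s = (x, y) + (s / dist (x, y) (a, 0)) *\<^sub>R ((a, 0) - (x, y))"
    and on_segment: "\<And>s. dist (x, y) (a, 0) \<le> s \<Longrightarrow>
        (\<exists>t\<in>{0..1}. \<forall>r\<in>{0..<s}. f r \<noteq> pkg t r) \<Longrightarrow>
        f s \<in> closed_segment (0, 0) (1, 0)"
  shows "min (CR x y (path_Ad x y)) (CR x y (path_A0 x y)) \<le> CR x y f"
proof -
  have xpos: "0 < x"
  proof (rule ccontr)
    assume "\<not> 0 < x"
    have sq: "(x - 1)\<^sup>2 = x * x - 2 * x + 1" by (simp add: power2_eq_square algebra_simps)
    have xx: "0 \<le> x * x" by simp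
    have "y\<^sup>2 \<le> 0" using in_disk sq xx \<open>\<not> 0 < x\<close> by linarith
    hence "y = 0" by simp
    moreover have "x = 0" using \<open>\<not> 0 < x\<close> in_disk \<open>y = 0\<close> sq xx by (simp, linarith)
    ultimately show False using P_ne by simp
  qed
  define h where "h = sqrt (x\<^sup>2 + y\<^sup>2)"
  define d where "d = (x\<^sup>2 + y\<^sup>2) / (2 * x)"
  have hd: "x\<^sup>2 + y\<^sup>2 = 2 * x * d" unfolding d_def using xpos by simp
  have d_le1: "d \<le> 1"
  proof -
    have "x\<^sup>2 + y\<^sup>2 \<le> 2 * x" using in_disk by (simp add: power2_eq_square algebra_simps)
    thus ?thesis using hd xpos by simp
  qed
  have dpos: "0 < d" unfolding d_def using xpos by (simp add: add_pos_nonneg)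
  define k where "k t = sqrt ((x - t)\<^sup>2 + y\<^sup>2)" for t
  have kdist: "\<And>t. dist (x, y) (t, 0) = k t" unfolding k_def by (rule dist_P_axis)
  have ksq: "\<And>t. (k t)\<^sup>2 = 2 * x * (d - t) + t\<^sup>2"
  proof -
    fix t
    have "(k t)\<^sup>2 = (x - t)\<^sup>2 + y\<^sup>2" unfolding k_def by simp
    also have "\<dots> = (x\<^sup>2 + y\<^sup>2) - 2 * x * t + t\<^sup>2" by (simp add: power2_eq_square algebra_simps)
    finally show "(k t)\<^sup>2 = 2 * x * (d - t) + t\<^sup>2" using hd by (simp add: algebra_simps)
  qed
  have k_nonneg: "\<And>t. 0 \<le> k t" unfolding k_def by simp
  have kd: "k d = d"
    using ksq[of d] k_nonneg[of d] dpos by (simp add: power2_eq_iff_nonneg)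
  have k_ge: "\<And>t. t \<le> d \<Longrightarrow> t \<le> k t"
  proof -
    fix t assume "t \<le> d"
    hence "t\<^sup>2 \<le> (k t)\<^sup>2" using ksq[of t] xpos by simp
    thus "t \<le> k t" using k_nonneg[of t] by (rule power2_le_imp_le)
  qed
  have k_gt: "\<And>t. t < d \<Longrightarrow> t < k t"
  proof -
    fix t assume "t < d"
    hence "t\<^sup>2 < (k t)\<^sup>2" using ksq[of t] xpos by simp
    thus "t < k t" using k_nonneg[of t] by (rule power2_less_imp_less)
  qed
  have opt_eq: "\<And>t. t \<le> d \<Longrightarrow> opt x y t = 1 + (k t - t)"
    unfolding opt_def k_def[symmetric] using k_ge by auto
  have opt1: "opt x y 1 = 1"
  proof -
    have "k 1 \<le> 1" unfolding k_def using in_disk by (simp add: real_sqrt_le_1_iff)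
    thus ?thesis unfolding opt_def k_def[symmetric] by simp
  qed
  have CRf_ge1: "ereal 1 \<le> CR x y f"
  proof -
    have "ereal 1 \<le> deliv f 1" by (rule deliv_ge1)
    thus ?thesis using CR_ge[of 1 f x y] opt1 by (simp add: one_ereal_def[symmetric])
  qed
  show ?thesis
  proof (cases "y = 0")
    case True
    have "CR x y (path_A0 x y) \<le> ereal 1"
      by (rule CR_le) (use A0_zero[OF xpos] True in auto)
    thus ?thesis using CRf_ge1 by (meson min.coboundedI2 order_trans)
  next
    case False
    hence ypos: "0 < y" using y_nonneg by simp
    define D where "D = dist (x, y) (a, 0)"
    have Dk: "D = k a" unfolding D_def by (rule kdist)
    have Dpos: "0 < D" unfolding Dk k_def using ypos by (simp add: add_nonneg_pos)
    have str: "\<And>s. 0 \<le> s \<Longrightarrow> s \<le> D \<Longrightarrow> f s = (x, y) + (s / D) *\<^sub>R ((a, 0) - (x, y))"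
      using straight unfolding D_def by blast
    have f0: "f 0 = (x, y)" using str[of 0] Dpos by simp
    have fD: "f D = (a, 0)" using str[of D] Dpos by simp
    have pre: "\<And>s. 0 \<le> s \<Longrightarrow> s < D \<Longrightarrow> 0 < snd (f s)"
    proof -
      fix s assume "0 \<le> s" "s < D"
      hence "snd (f s) = y * (1 - s / D)" using str[of s] by (simp add: algebra_simps)
      moreover have "0 < 1 - s / D" using \<open>s < D\<close> Dpos by simp
      ultimately show "0 < snd (f s)" using ypos by simp
    qed
    have lip: "\<And>r s. 0 \<le> r \<Longrightarrow> 0 \<le> s \<Longrightarrow> dist (f r) (f s) \<le> \<bar>r - s\<bar>" by (rule speed)
    have cont: "continuous_on {0..} f"
    proof -
      have "lipschitz_on 1 {0..} f"
        by (rule lipschitz_onI) (use speed in \<open>auto simp: dist_real_def\<close>)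
      thus ?thesis by (rule lipschitz_on_continuous_on)
    qed
    have meetD: "\<And>t s. s \<in> meet_times f t \<Longrightarrow> D \<le> s \<and> f s = (min s t, 0)"
    proof -
      fix t s assume "s \<in> meet_times f t"
      hence s0: "0 \<le> s" and fs: "f s = (min s t, 0)" unfolding meet_times_def pkg_def by auto
      have "D \<le> s" using pre[OF s0] fs by force
      thus "D \<le> s \<and> f s = (min s t, 0)" using fs by simp
    qed
    have lipD: "\<And>s p. D \<le> s \<Longrightarrow> f s = (p, 0) \<Longrightarrow> \<bar>p - a\<bar> \<le> s - D"
    proof -
      fix s p assume "D \<le> s" "f s = (p, 0)"
      have "dist (f s) (f D) \<le> \<bar>s - D\<bar>" using lip[of s D] Dpos \<open>D \<le> s\<close> by simp
      thus "\<bar>p - a\<bar> \<le> s - D" using \<open>f s = (p, 0)\<close> fD \<open>D \<le> s\<close> by (simp add: dist_axis)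
    qed
    show ?thesis
    proof (cases "d \<le> a")
      case True
      have Da: "2 * d \<le> D + a"
      proof -
        have "dist (x, y) (d, 0) \<le> dist (x, y) (a, 0) + dist (a, 0) (d, (0::real))"
          by (rule dist_triangle)
        thus ?thesis using kd True unfolding kdist D_def[symmetric] Dk by (simp add: dist_axis)
      qed
      have "CR x y (path_Ad x y) \<le> CR x y f"
      proof (rule CR_le)
        fix t :: real assume t01: "t \<in> {0..1}"
        show "deliv (path_Ad x y) t / ereal (opt x y t) \<le> CR x y f"
        proof (cases "d \<le> t")
          case True
          hence "deliv (path_Ad x y) t / ereal (opt x y t) \<le> ereal 1"
            using Ad_far[OF xpos t01] d_def by simp
          thus ?thesis using CRf_ge1 by simp
        next
          case False
          hence "deliv (path_Ad x y) t / ereal (opt x y t) \<le> ereal ((1 + 2 * d - 2 * t) / opt x y t)"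
            using Ad_near[OF xpos t01] d_def by simp
          also have "\<dots> \<le> CR x y f"
          proof -
            have "ereal ((2 * d - t + 1 - t) / opt x y t) \<le> CR x y f"
            proof (rule CR_lower[OF t01])
              fix s assume sm: "s \<in> meet_times f t"
              hence Ds: "D \<le> s" and fs: "f s = (min s t, 0)" using meetD by auto
              have "\<bar>min s t - a\<bar> \<le> s - D" by (rule lipD[OF Ds fs])
              moreover have "min s t \<le> t" by simp
              ultimately show "2 * d - t \<le> s" using Da \<open>d \<le> a\<close> False by linarith
            next
              show "t \<le> 2 * d - t" using False by simp
            qed
            thus ?thesis by (simp add: algebra_simps)
          qed
          finally show ?thesis .
        qed
      qed
      thus ?thesis by (meson min.coboundedI1 order_trans)
    next
      case False
      hence ad: "a < d" by simp
      have Dgt: "a < D" unfolding Dk by (rule k_gt[OF ad])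
      have hk: "h = k 0" unfolding h_def k_def by simp
      have meetD2: "\<And>t s. s \<in> meet_times f t \<Longrightarrow> D \<le> s \<and> t < s \<and> f s = (t, 0)"
      proof -
        fix t s assume sm: "s \<in> meet_times f t"
        hence Ds: "D \<le> s" and fs: "f s = (min s t, 0)" using meetD by auto
        have "t < s"
        proof (rule ccontr)
          assume "\<not> t < s"
          hence "min s t = s" by simp
          hence "\<bar>s - a\<bar> \<le> s - D" using lipD[OF Ds] fs by simp
          thus False using Dgt by linarith
        qed
        thus "D \<le> s \<and> t < s \<and> f s = (t, 0)" using Ds fs by simp
      qed
      show ?thesis
      proof (cases "meet_times f 0 = {} \<or> meet_times f 1 = {}")
        case True
        hence "CR x y f = \<infinity>" using CR_inf[of 0 f x y] CR_inf[of 1 f x y] by auto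
        thus ?thesis by simp
      next
        case False
        define \<tau>0 where "\<tau>0 = Inf (meet_times f 0)"
        define \<tau>1 where "\<tau>1 = Inf (meet_times f 1)"
        have m0: "\<tau>0 \<in> meet_times f 0" and low0: "\<And>s. s \<in> meet_times f 0 \<Longrightarrow> \<tau>0 \<le> s"
          using meet_Inf[OF cont, of 0] False unfolding \<tau>0_def by auto
        have m1: "\<tau>1 \<in> meet_times f 1" and low1: "\<And>s. s \<in> meet_times f 1 \<Longrightarrow> \<tau>1 \<le> s"
          using meet_Inf[OF cont, of 1] False unfolding \<tau>1_def by auto
        have f\<tau>0: "f \<tau>0 = (0, 0)" and D\<tau>0: "D \<le> \<tau>0" using meetD2[OF m0] by auto
        have f\<tau>1: "f \<tau>1 = (1, 0)" and D\<tau>1: "D \<le> \<tau>1" and one\<tau>1: "1 < \<tau>1" using meetD2[OF m1] by auto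
        have h\<tau>0: "h \<le> \<tau>0"
        proof -
          have "dist (f 0) (f \<tau>0) \<le> \<bar>0 - \<tau>0\<bar>" using lip[of 0 \<tau>0] D\<tau>0 Dpos by simp
          thus ?thesis using f0 f\<tau>0 D\<tau>0 Dpos kdist[of 0] hk by simp
        qed
        have h0: "0 \<le> h" unfolding h_def by simp
        show ?thesis
        proof (cases "\<tau>0 \<le> \<tau>1")
          case True
          have "ereal ((1 + h + 1 - 1) / opt x y 1) \<le> CR x y f"
          proof (rule CR_lower)
            fix s assume "s \<in> meet_times f 1"
            hence "\<tau>1 \<le> s" by (rule low1)
            moreover have "dist (f \<tau>1) (f \<tau>0) \<le> \<bar>\<tau>1 - \<tau>0\<bar>" using lip[of \<tau>1 \<tau>0] D\<tau>0 D\<tau>1 Dpos by simp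
            hence "1 \<le> \<tau>1 - \<tau>0" using f\<tau>0 f\<tau>1 True by (simp add: dist_axis)
            ultimately show "1 + h \<le> s" using h\<tau>0 by linarith
          qed (use h0 in auto)
          hence "ereal (1 + h) \<le> CR x y f" using opt1 by simp
          moreover have "CR x y (path_A0 x y) \<le> ereal (1 + h)"
            by (rule CR_le) (use A0_pos[OF ypos] h_def in auto)
          ultimately show ?thesis by (meson min.coboundedI2 order_trans)
        next
          case False
          hence \<tau>10: "\<tau>1 < \<tau>0" by simp
          have seg: "\<And>s. D \<le> s \<Longrightarrow> s \<le> \<tau>1 \<Longrightarrow> 0 < fst (f s) \<and> f s = (fst (f s), 0)"
          proof -
            fix s assume Ds: "D \<le> s" and s1: "s \<le> \<tau>1"
            have nm: "\<And>r. 0 \<le> r \<Longrightarrow> r < \<tau>0 \<Longrightarrow> f r \<noteq> pkg 0 r"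
              using low0 unfolding meet_times_def by force
            have "\<exists>t\<in>{0..1}. \<forall>r\<in>{0..<s}. f r \<noteq> pkg t r"
              by (rule bexI[of _ 0]) (use nm s1 \<tau>10 in auto)
            hence "f s \<in> closed_segment (0, 0) (1, 0)" using on_segment Ds unfolding D_def by blast
            then obtain u :: real where u: "0 \<le> u" "u \<le> 1" "f s = (1 - u) *\<^sub>R (0, 0) + u *\<^sub>R (1, 0)"
              unfolding in_segment by blast
            hence fs: "f s = (u, 0)" by simp
            have "f s \<noteq> pkg 0 s" using nm[of s] Ds Dpos s1 \<tau>10 by simp
            hence "u \<noteq> 0" using fs unfolding pkg_def using Ds Dpos by auto
            thus "0 < fst (f s) \<and> f s = (fst (f s), 0)" using fs u by simp
          qed
          have "\<exists>sc\<in>{D..\<tau>1}. \<forall>s\<in>{D..\<tau>1}. fst (f sc) \<le> fst (f s)"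
          proof (rule continuous_attains_inf)
            show "continuous_on {D..\<tau>1} (\<lambda>s. fst (f s))"
              by (intro continuous_intros continuous_on_subset[OF cont]) (use Dpos in auto)
          qed (use D\<tau>1 in auto)
          then obtain sc where sc: "sc \<in> {D..\<tau>1}" and scmin: "\<And>s. s \<in> {D..\<tau>1} \<Longrightarrow> fst (f sc) \<le> fst (f s)"
            by blast
          define c where "c = fst (f sc)"
          have fsc: "f sc = (c, 0)" and cpos: "0 < c" using seg[of sc] sc unfolding c_def by auto
          have ca: "c \<le> a" using scmin[of D] D\<tau>1 fD unfolding c_def by simp
          have cd: "c < d" using ca ad by simp
          have c1: "c \<le> 1" using ca a_range by simp
          have T1: "D + a + 1 - 2 * c \<le> \<tau>1"
          proof -
            have "\<bar>c - a\<bar> \<le> sc - D" using lipD[of sc c] sc fsc by simp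
            moreover have "dist (f \<tau>1) (f sc) \<le> \<bar>\<tau>1 - sc\<bar>" using lip[of \<tau>1 sc] sc Dpos by simp
            hence "\<bar>1 - c\<bar> \<le> \<tau>1 - sc" using f\<tau>1 fsc sc by (simp add: dist_axis)
            ultimately show ?thesis using ca c1 by linarith
          qed
          define W where "W = D + a - 2 * c"
          define E where "E = k c - c"
          have WE: "E \<le> W"
          proof -
            have "dist (x, y) (c, 0) \<le> dist (x, y) (a, 0) + dist (a, 0) (c, (0::real))"
              by (rule dist_triangle)
            thus ?thesis using ca Dk unfolding kdist D_def[symmetric] E_def W_def by (simp add: dist_axis)
          qed
          have E0: "0 \<le> E" unfolding E_def using k_ge[of c] cd by simp
          have CR1: "ereal (1 + W) \<le> CR x y f"
          proof -
            have "ereal ((1 + W + 1 - 1) / opt x y 1) \<le> CR x y f"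
            proof (rule CR_lower)
              fix s assume "s \<in> meet_times f 1"
              hence "\<tau>1 \<le> s" by (rule low1)
              thus "1 + W \<le> s" using T1 unfolding W_def by linarith
            qed (use WE E0 in auto)
            thus ?thesis using opt1 by simp
          qed
          have CRt: "\<And>t. 0 \<le> t \<Longrightarrow> t < c \<Longrightarrow> ereal ((W + 3 - 2 * t) / opt x y t) \<le> CR x y f"
          proof -
            fix t assume t0: "0 \<le> t" and tc: "t < c"
            have "ereal ((W + 2 - t + 1 - t) / opt x y t) \<le> CR x y f"
            proof (rule CR_lower)
              show "t \<in> {0..1}" using t0 tc c1 by simp
            next
              fix s assume sm: "s \<in> meet_times f t"
              hence Ds: "D \<le> s" and fs: "f s = (t, 0)" using meetD2 by auto
              have "\<tau>1 < s"
              proof (rule ccontr)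
                assume "\<not> \<tau>1 < s"
                hence "c \<le> fst (f s)" using scmin[of s] Ds unfolding c_def by simp
                thus False using fs tc by simp
              qed
              moreover have "dist (f s) (f \<tau>1) \<le> \<bar>s - \<tau>1\<bar>" using lip[of s \<tau>1] Ds D\<tau>1 Dpos by simp
              hence "\<bar>t - 1\<bar> \<le> \<bar>s - \<tau>1\<bar>" using fs f\<tau>1 by (simp add: dist_axis)
              ultimately show "W + 2 - t \<le> s" using T1 tc c1 unfolding W_def by linarith
            next
              show "t \<le> W + 2 - t" using WE E0 tc c1 by linarith
            qed
            thus "ereal ((W + 3 - 2 * t) / opt x y t) \<le> CR x y f" by (simp add: algebra_simps)
          qed
          show ?thesis
          proof (cases "CR x y f = \<infinity>")
            case True thus ?thesis by simp
          next
            case False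
            obtain M where M: "CR x y f = ereal M"
              using False CRf_ge1 by (cases "CR x y f") auto
            have M1: "1 \<le> M" using CRf_ge1 M by simp
            show ?thesis
            proof (cases "1 + h \<le> M")
              case True
              have "CR x y (path_A0 x y) \<le> ereal (1 + h)"
                by (rule CR_le) (use A0_pos[OF ypos] h_def in auto)
              also have "\<dots> \<le> CR x y f" using True M by simp
              finally show ?thesis by (meson min.coboundedI2)
            next
              case False
              hence Mh: "M < 1 + h" by simp
              have WM: "1 + W \<le> M" using CR1 M by simp
              have optc: "opt x y c = 1 + E" using opt_eq[of c] cd unfolding E_def by simp
              have phi: "W + 3 - 2 * c \<le> M * (1 + E)"
              proof -
                let ?phi = "\<lambda>t. (W + 3 - 2 * t) / opt x y t"
                have optpos: "\<And>t. 0 < opt x y t" using opt_ge1 by (smt (verit))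
                have "continuous_on {0..c} ?phi"
                  unfolding opt_def
                  by (intro continuous_intros) (use opt_ge1 in \<open>auto simp: opt_def\<close>)
                hence cc: "continuous_on (closure {0..<c}) ?phi" using cpos by simp
                have "?phi c \<le> M"
                proof (rule continuous_le_on_closure[OF cc])
                  show "c \<in> closure {0..<c}" using cpos by simp
                next
                  fix t assume "t \<in> {0..<c}"
                  thus "?phi t \<le> M" using CRt[of t] M by simp
                qed
                thus ?thesis using optc E0 by (simp add: divide_le_eq mult.commute)
              qed
              have "CR x y (path_Ad x y) \<le> ereal M"
              proof (rule CR_le)
                fix t0 :: real assume t01: "t0 \<in> {0..1}"
                show "deliv (path_Ad x y) t0 / ereal (opt x y t0) \<le> ereal M"
                proof (cases "d \<le> t0")
                  case True
                  hence "deliv (path_Ad x y) t0 / ereal (opt x y t0) \<le> ereal 1"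
                    using Ad_far[OF xpos t01] d_def by simp
                  thus ?thesis using M1 by (simp add: order_trans)
                next
                  case False
                  hence near: "deliv (path_Ad x y) t0 / ereal (opt x y t0) \<le> ereal ((1 + 2 * d - 2 * t0) / opt x y t0)"
                    using Ad_near[OF xpos t01] d_def by simp
                  have optp: "0 < opt x y t0" using opt_ge1[of x y t0] by linarith
                  show ?thesis
                  proof (cases "t0 < c")
                    case True
                    have "(1 + 2 * d - 2 * t0) / opt x y t0 \<le> (W + 3 - 2 * t0) / opt x y t0"
                      using optp d_le1 WE E0 by (intro divide_right_mono) auto
                    hence "ereal ((1 + 2 * d - 2 * t0) / opt x y t0) \<le> CR x y f"
                      using CRt[of t0] True t01 by (meson atLeastAtMost_iff ereal_less_eq(3) order_trans)
                    thus ?thesis using near M by (metis order_trans)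
                  next
                    case False
                    define e0 where "e0 = k t0 - t0"
                    have opt0: "opt x y t0 = 1 + e0" using opt_eq[of t0] \<open>\<not> d \<le> t0\<close> unfolding e0_def by simp
                    have e00: "0 \<le> e0" unfolding e0_def using k_ge[of t0] \<open>\<not> d \<le> t0\<close> by simp
                    have he: "h - 2 * t0 \<le> e0"
                    proof -
                      have "dist (x, y) (0, 0) \<le> dist (x, y) (t0, 0) + dist (t0, 0) (0, (0::real))"
                        by (rule dist_triangle)
                      thus ?thesis using t01 unfolding kdist e0_def hk by (simp add: dist_axis)
                    qed
                    have Ee: "E - e0 \<le> 2 * (t0 - c)"
                    proof -
                      have "dist (x, y) (c, 0) \<le> dist (x, y) (t0, 0) + dist (t0, 0) (c, (0::real))"
                        by (rule dist_triangle)
                      thus ?thesis using False unfolding kdist e0_def E_def by (simp add: dist_axis)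
                    qed
                    have "1 + 2 * d - 2 * t0 \<le> M * (1 + e0)"
                    proof (rule key_ineq[where E = E and h = h and c = c])
                      have "(1 + E) + 2 * (d - c) \<le> W + 3 - 2 * c" using WE d_le1 by (simp add: right_diff_distrib)
                      thus "(1 + E) + 2 * (d - c) \<le> M * (1 + E)" using phi by (rule order_trans)
                    qed (use e00 E0 False \<open>\<not> d \<le> t0\<close> d_le1 t01 he Ee WE WM Mh in auto)
                    hence "(1 + 2 * d - 2 * t0) / opt x y t0 \<le> M"
                      using opt0 e00 by (simp add: divide_le_eq mult.commute)
                    thus ?thesis using near by (meson ereal_less_eq(3) order_trans)
                  qed
                qed
              qed
              thus ?thesis using M by (simp add: min.coboundedI1)
            qed
          qed
        qed
      qed
    qed
  qed
qed


end
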